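(* Let $n,m\ge 1$, $Q=\{1,\dots,n\}$ and $D=\{1,\dots,m\}$. Consider any MCT circuit $(g_1,\dots,g_m)$ on qubits $Q$ (as defined in the context) to which at least one of Swap 1, Swap 2, Swap 3 applies. Then, by applying Swap 1, Swap 2 and Swap 3 repeatedly (finitely many times), this circuit can be turned into an unswappable circuit.
   Context: An MCT circuit on qubits $Q=\{1,\dots,n\}$ with $m$ gate positions is a sequence $(g_1,\dots,g_m)$, where each gate $g_d$ ($d\in D=\{1,\dots,m\}$) is either empty, or consists of exactly one target qubit $t(g_d)\in Q$ together with a set $C(g_d)\subseteq Q\setminus\{t(g_d)\}$ of control qubits. (Equivalently, with binary variables $t_q^d$ indicating that $q$ is the target of gate $d$ and $w_q^d$ indicating that $q$ is a control of gate $d$: $t_q^d+w_q^d\le 1$, $\sum_q t_q^d\le 1$, and a gate with no target has no controls.) The following operations each exchange two consecutive gates $g_d$ and $g_{d+1}$ (for $d\in\{1,\dots,m-1\}$): Swap 1 (empty gate): if $g_d$ is empty and $g_{d+1}$ is not empty, swap $g_d$ and $g_{d+1}$. Swap 2 (different target): if $g_d$ has target $q$ and $g_{d+1}$ has target $r$ with $q>r$, and $q\notin C(g_{d+1})$ and $r\notin C(g_d)$, swap $g_d$ and $g_{d+1}$. Swap 3 (same target): if $g_d$ and $g_{d+1}$ have the same target qubit and $|C(g_d)|<|C(g_{d+1})|$, swap $g_d$ and $g_{d+1}$. A circuit is called swappable if at least one of Swap 1, Swap 2, Swap 3 can be applied to it (for some $d$), and unswappable otherwise. *)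

theory Defs
  imports Main
begin

text \<open>A gate is either empty (None) or Some (t, C) with target t and control set C.\<close>
type_synonym gate = "(nat \<times> nat set) option"

definition wf_gate :: "nat \<Rightarrow> gate \<Rightarrow> bool" where
  "wf_gate n g = (case g of None \<Rightarrow> True
     | Some (t, C) \<Rightarrow> t \<in> {1..n} \<and> C \<subseteq> {1..n} - {t})"

text \<open>An MCT circuit on qubits {1..n} with m gate positions: a list of m well-formed gates.
  List positions are 0-based: position d of the list is gate g_(d+1).\<close>
definition mct_circuit :: "nat \<Rightarrow> nat \<Rightarrow> gate list \<Rightarrow> bool" where
  "mct_circuit n m c = (length c = m \<and> (\<forall>g\<in>set c. wf_gate n g))"

definition swap1_cond :: "gate \<Rightarrow> gate \<Rightarrow> bool" where
  "swap1_cond g h = (g = None \<and> h \<noteq> None)"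

definition swap2_cond :: "gate \<Rightarrow> gate \<Rightarrow> bool" where
  "swap2_cond g h = (\<exists>q Cq r Cr. g = Some (q, Cq) \<and> h = Some (r, Cr) \<and> q > r
      \<and> q \<notin> Cr \<and> r \<notin> Cq)"

definition swap3_cond :: "gate \<Rightarrow> gate \<Rightarrow> bool" where
  "swap3_cond g h = (\<exists>q Cg Ch. g = Some (q, Cg) \<and> h = Some (q, Ch) \<and> card Cg < card Ch)"

definition swap_step :: "gate list \<Rightarrow> gate list \<Rightarrow> bool" where
  "swap_step c c' = (\<exists>d. Suc d < length c
      \<and> (swap1_cond (c ! d) (c ! Suc d) \<or> swap2_cond (c ! d) (c ! Suc d)
         \<or> swap3_cond (c ! d) (c ! Suc d))
      \<and> c' = c[d := c ! Suc d, Suc d := c ! d])"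

definition swappable :: "gate list \<Rightarrow> bool" where
  "swappable c = (\<exists>c'. swap_step c c')"

end

theory Submission
  imports Defs
begin

definition key :: "nat \<Rightarrow> gate \<Rightarrow> nat" where
  "key n g = (case g of None \<Rightarrow> (n+2)*(n+2) | Some (t, C) \<Rightarrow> t*(n+2) + (n+1 - card C))"

fun ws :: "nat \<Rightarrow> gate list \<Rightarrow> nat" where
  "ws n [] = 0"
| "ws n (x # xs) = key n x * (length xs + 1) + ws n xs"

lemma ws_append: "ws n (xs @ ys) = ws n xs + sum_list (map (key n) xs) * length ys + ws n ys"
  by (induction xs) (auto simp: algebra_simps)

lemma card_le: assumes "wf_gate n (Some (t, C))" shows "card C \<le> n" "t \<le> n"
proof -
  have "C \<subseteq> {1..n}" using assms by (auto simp: wf_gate_def)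
  then show "card C \<le> n" using card_mono[of "{1..n}" C] by simp
  show "t \<le> n" using assms by (auto simp: wf_gate_def)
qed

lemma key_dec:
  assumes "wf_gate n g" "wf_gate n h"
    and "swap1_cond g h \<or> swap2_cond g h \<or> swap3_cond g h"
  shows "key n h < key n g"
  using assms(3)
proof (elim disjE)
  assume "swap1_cond g h"
  then obtain t C where g: "g = None" and h: "h = Some (t, C)" by (auto simp: swap1_cond_def)
  have "t \<le> n" using card_le assms(2) h by blast
  then have "t*(n+2) \<le> n*(n+2)" using mult_le_mono1 by blast
  moreover have "(n+2)*(n+2) = n*(n+2) + 2*n + 4" by (simp add: algebra_simps)
  ultimately show ?thesis using g h by (simp add: key_def)
next
  assume "swap2_cond g h"
  then obtain q Cq r Cr where g: "g = Some (q, Cq)" and h: "h = Some (r, Cr)" and "q > r"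
    by (auto simp: swap2_cond_def)
  then have "(r+1)*(n+2) \<le> q*(n+2)" by (intro mult_le_mono1) simp
  then show ?thesis using g h by (simp add: key_def algebra_simps)
next
  assume "swap3_cond g h"
  then obtain q Cg Ch where g: "g = Some (q, Cg)" and h: "h = Some (q, Ch)" and "card Cg < card Ch"
    by (auto simp: swap3_cond_def)
  moreover have "card Ch \<le> n" using card_le assms(2) h by blast
  ultimately show ?thesis by (simp add: key_def)
qed

lemma step_props:
  assumes "swap_step c c'" "\<forall>g\<in>set c. wf_gate n g"
  shows "ws n c' < ws n c" "set c' = set c"
proof -
  obtain d where d: "Suc d < length c"
    and cond: "swap1_cond (c ! d) (c ! Suc d) \<or> swap2_cond (c ! d) (c ! Suc d)
         \<or> swap3_cond (c ! d) (c ! Suc d)"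
    and c': "c' = c[d := c ! Suc d, Suc d := c ! d]"
    using assms(1) unfolding swap_step_def by blast
  define a where "a = c ! d"
  define b where "b = c ! Suc d"
  define xs where "xs = take d c"
  define ys where "ys = drop (Suc (Suc d)) c"
  have cdec: "c = xs @ [a, b] @ ys"
    unfolding xs_def ys_def a_def b_def using d
    by (metis Cons_nth_drop_Suc Suc_lessD append_Cons append_Nil append_take_drop_id)
  have lx: "length xs = d" using d by (simp add: xs_def)
  have "c[d := b, Suc d := a] = xs @ [b, a] @ ys"
    by (subst cdec) (simp add: list_update_append lx)
  then have c'dec: "c' = xs @ [b, a] @ ys"
    using c' a_def b_def by simp
  have "wf_gate n a" "wf_gate n b" using assms(2) cdec by auto
  then have "key n b < key n a" using key_dec cond a_def b_def by blast
  then show "ws n c' < ws n c" unfolding cdec c'dec ws_append by (simp add: algebra_simps)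
  show "set c' = set c" unfolding cdec c'dec by auto
qed

lemma reach:
  "\<forall>g\<in>set c. wf_gate n g \<Longrightarrow> \<exists>c'. swap_step\<^sup>*\<^sup>* c c' \<and> \<not> swappable c'"
proof (induction "ws n c" arbitrary: c rule: less_induct)
  case less
  show ?case
  proof (cases "swappable c")
    case False then show ?thesis by blast
  next
    case True
    then obtain c1 where s: "swap_step c c1" by (auto simp: swappable_def)
    from step_props[OF s less.prems] have "ws n c1 < ws n c" "set c1 = set c" by auto
    then obtain c' where "swap_step\<^sup>*\<^sup>* c1 c'" "\<not> swappable c'"
      using less by metis
    then show ?thesis using s by (meson converse_rtranclp_into_rtranclp)
  qed
qed

theorem proposition1:
  fixes n m :: nat and c :: "gate list"
  assumes "n \<ge> 1" and "m \<ge> 1"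
    and "mct_circuit n m c"
    and "swappable c"
  shows "\<exists>c'. swap_step\<^sup>*\<^sup>* c c' \<and> \<not> swappable c'"
  using reach assms(3) unfolding mct_circuit_def by blast

end
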